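(* Let $(\mathcal{A},\mathcal{E})$ be an exact category and let $X\xrightarrow{f}Y\xrightarrow{g}Z$ be a short exact sequence in $\mathcal{E}$ whose three objects are $\mathcal{E}$-finite. Then $l_\mathcal{E}(Y)\ge l_\mathcal{E}(X)+l_\mathcal{E}(Z)$.
   Context: $(\mathcal{A},\mathcal{E})$ is a Quillen exact category; admissible monics are morphisms $i$ with $(i,d)\in\mathcal{E}$ for some $d$. The $\mathcal{E}$-length $l_\mathcal{E}(X)\in\mathbb{N}\cup\{\infty\}$ is the supremum of all $n$ such that there is a chain $0=X_0\to X_1\to\cdots\to X_n=X$ of admissible monics none of which is an isomorphism; $X$ is $\mathcal{E}$-finite if $l_\mathcal{E}(X)<\infty$. *)

theory Defs
  imports "HOL-Library.Extended_Nat"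
begin

text \<open>A category with additive structure on hom-sets, presented as a record.
  Comp g f denotes the composite g after f (defined when Cod f = Dom g).\<close>

record ('o, 'm) addcat =
  Obj  :: "'o set"
  Mor  :: "'m set"
  Dom  :: "'m \<Rightarrow> 'o"
  Cod  :: "'m \<Rightarrow> 'o"
  Id   :: "'o \<Rightarrow> 'm"
  Comp :: "'m \<Rightarrow> 'm \<Rightarrow> 'm"
  Add  :: "'m \<Rightarrow> 'm \<Rightarrow> 'm"
  Neg  :: "'m \<Rightarrow> 'm"
  Zm   :: "'o \<Rightarrow> 'o \<Rightarrow> 'm"

definition hom :: "('o, 'm, 'x) addcat_scheme \<Rightarrow> 'o \<Rightarrow> 'o \<Rightarrow> 'm set" where
  "hom C a b = {f \<in> Mor C. Dom C f = a \<and> Cod C f = b}"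

definition category :: "('o, 'm, 'x) addcat_scheme \<Rightarrow> bool" where
  "category C \<longleftrightarrow>
     (\<forall>f \<in> Mor C. Dom C f \<in> Obj C \<and> Cod C f \<in> Obj C) \<and>
     (\<forall>a \<in> Obj C. Id C a \<in> hom C a a) \<and>
     (\<forall>f \<in> Mor C. \<forall>g \<in> Mor C. Cod C f = Dom C g \<longrightarrow>
         Comp C g f \<in> hom C (Dom C f) (Cod C g)) \<and>
     (\<forall>f \<in> Mor C. Comp C f (Id C (Dom C f)) = f \<and> Comp C (Id C (Cod C f)) f = f) \<and>
     (\<forall>f \<in> Mor C. \<forall>g \<in> Mor C. \<forall>h \<in> Mor C. Cod C f = Dom C g \<longrightarrow> Cod C g = Dom C h \<longrightarrow>
         Comp C h (Comp C g f) = Comp C (Comp C h g) f)"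

definition preadditive :: "('o, 'm, 'x) addcat_scheme \<Rightarrow> bool" where
  "preadditive C \<longleftrightarrow> category C \<and>
     (\<forall>a \<in> Obj C. \<forall>b \<in> Obj C.
        Zm C a b \<in> hom C a b \<and>
        (\<forall>f \<in> hom C a b. \<forall>g \<in> hom C a b. Add C f g \<in> hom C a b) \<and>
        (\<forall>f \<in> hom C a b. Neg C f \<in> hom C a b) \<and>
        (\<forall>f \<in> hom C a b. \<forall>g \<in> hom C a b. \<forall>h \<in> hom C a b.
            Add C (Add C f g) h = Add C f (Add C g h)) \<and>
        (\<forall>f \<in> hom C a b. \<forall>g \<in> hom C a b. Add C f g = Add C g f) \<and>
        (\<forall>f \<in> hom C a b. Add C f (Zm C a b) = f) \<and>
        (\<forall>f \<in> hom C a b. Add C f (Neg C f) = Zm C a b)) \<and>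
     (\<forall>a \<in> Obj C. \<forall>b \<in> Obj C. \<forall>c \<in> Obj C.
        \<forall>f \<in> hom C a b. \<forall>f' \<in> hom C a b. \<forall>g \<in> hom C b c. \<forall>g' \<in> hom C b c.
          Comp C g (Add C f f') = Add C (Comp C g f) (Comp C g f') \<and>
          Comp C (Add C g g') f = Add C (Comp C g f) (Comp C g' f))"

definition zero_obj :: "('o, 'm, 'x) addcat_scheme \<Rightarrow> 'o \<Rightarrow> bool" where
  "zero_obj C z \<longleftrightarrow> z \<in> Obj C \<and>
     (\<forall>a \<in> Obj C. (\<exists>!f. f \<in> hom C z a) \<and> (\<exists>!f. f \<in> hom C a z))"

definition is_biproduct :: "('o, 'm, 'x) addcat_scheme \<Rightarrow> 'o \<Rightarrow> 'o \<Rightarrow> 'o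
    \<Rightarrow> 'm \<Rightarrow> 'm \<Rightarrow> 'm \<Rightarrow> 'm \<Rightarrow> bool" where
  "is_biproduct C a b p i1 i2 p1 p2 \<longleftrightarrow> p \<in> Obj C \<and>
     i1 \<in> hom C a p \<and> i2 \<in> hom C b p \<and> p1 \<in> hom C p a \<and> p2 \<in> hom C p b \<and>
     Comp C p1 i1 = Id C a \<and> Comp C p2 i2 = Id C b \<and>
     Comp C p1 i2 = Zm C b a \<and> Comp C p2 i1 = Zm C a b \<and>
     Add C (Comp C i1 p1) (Comp C i2 p2) = Id C p"

definition additive :: "('o, 'm, 'x) addcat_scheme \<Rightarrow> bool" where
  "additive C \<longleftrightarrow> preadditive C \<and> (\<exists>z. zero_obj C z) \<and>
     (\<forall>a \<in> Obj C. \<forall>b \<in> Obj C. \<exists>p i1 i2 p1 p2. is_biproduct C a b p i1 i2 p1 p2)"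

definition is_iso :: "('o, 'm, 'x) addcat_scheme \<Rightarrow> 'm \<Rightarrow> bool" where
  "is_iso C f \<longleftrightarrow> f \<in> Mor C \<and> (\<exists>g \<in> hom C (Cod C f) (Dom C f).
      Comp C g f = Id C (Dom C f) \<and> Comp C f g = Id C (Cod C f))"

definition is_kernel :: "('o, 'm, 'x) addcat_scheme \<Rightarrow> 'm \<Rightarrow> 'm \<Rightarrow> bool" where
  "is_kernel C i d \<longleftrightarrow> i \<in> Mor C \<and> d \<in> Mor C \<and> Cod C i = Dom C d \<and>
     Comp C d i = Zm C (Dom C i) (Cod C d) \<and>
     (\<forall>t \<in> Obj C. \<forall>h \<in> hom C t (Dom C d). Comp C d h = Zm C t (Cod C d) \<longrightarrow>
        (\<exists>!u. u \<in> hom C t (Dom C i) \<and> Comp C i u = h))"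

definition is_cokernel :: "('o, 'm, 'x) addcat_scheme \<Rightarrow> 'm \<Rightarrow> 'm \<Rightarrow> bool" where
  "is_cokernel C d i \<longleftrightarrow> i \<in> Mor C \<and> d \<in> Mor C \<and> Cod C i = Dom C d \<and>
     Comp C d i = Zm C (Dom C i) (Cod C d) \<and>
     (\<forall>t \<in> Obj C. \<forall>h \<in> hom C (Cod C i) t. Comp C h i = Zm C (Dom C i) t \<longrightarrow>
        (\<exists>!u. u \<in> hom C (Cod C d) t \<and> Comp C u d = h))"

definition kernel_cokernel_pair :: "('o, 'm, 'x) addcat_scheme \<Rightarrow> 'm \<Rightarrow> 'm \<Rightarrow> bool" where
  "kernel_cokernel_pair C i d \<longleftrightarrow> is_kernel C i d \<and> is_cokernel C d i"

definition is_pushout :: "('o, 'm, 'x) addcat_scheme \<Rightarrow> 'm \<Rightarrow> 'm \<Rightarrow> 'm \<Rightarrow> 'm \<Rightarrow> bool" where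
  "is_pushout C i f i' f' \<longleftrightarrow>
     i \<in> Mor C \<and> f \<in> Mor C \<and> i' \<in> Mor C \<and> f' \<in> Mor C \<and>
     Dom C i = Dom C f \<and> Dom C i' = Cod C f \<and> Dom C f' = Cod C i \<and> Cod C i' = Cod C f' \<and>
     Comp C i' f = Comp C f' i \<and>
     (\<forall>t \<in> Obj C. \<forall>u \<in> hom C (Cod C f) t. \<forall>v \<in> hom C (Cod C i) t.
        Comp C u f = Comp C v i \<longrightarrow>
        (\<exists>!w. w \<in> hom C (Cod C i') t \<and> Comp C w i' = u \<and> Comp C w f' = v))"

definition is_pullback :: "('o, 'm, 'x) addcat_scheme \<Rightarrow> 'm \<Rightarrow> 'm \<Rightarrow> 'm \<Rightarrow> 'm \<Rightarrow> bool" where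
  "is_pullback C d f d' f' \<longleftrightarrow>
     d \<in> Mor C \<and> f \<in> Mor C \<and> d' \<in> Mor C \<and> f' \<in> Mor C \<and>
     Cod C d = Cod C f \<and> Cod C d' = Dom C f \<and> Cod C f' = Dom C d \<and> Dom C d' = Dom C f' \<and>
     Comp C d f' = Comp C f d' \<and>
     (\<forall>t \<in> Obj C. \<forall>u \<in> hom C t (Dom C f). \<forall>v \<in> hom C t (Dom C d).
        Comp C f u = Comp C d v \<longrightarrow>
        (\<exists>!w. w \<in> hom C t (Dom C d') \<and> Comp C d' w = u \<and> Comp C f' w = v))"

definition adm_monic :: "('o, 'm, 'x) addcat_scheme \<Rightarrow> ('m \<times> 'm) set \<Rightarrow> 'm \<Rightarrow> bool" where
  "adm_monic C E i \<longleftrightarrow> (\<exists>d. (i, d) \<in> E)"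

definition adm_epic :: "('o, 'm, 'x) addcat_scheme \<Rightarrow> ('m \<times> 'm) set \<Rightarrow> 'm \<Rightarrow> bool" where
  "adm_epic C E d \<longleftrightarrow> (\<exists>i. (i, d) \<in> E)"

definition exact_category :: "('o, 'm, 'x) addcat_scheme \<Rightarrow> ('m \<times> 'm) set \<Rightarrow> bool" where
  "exact_category C E \<longleftrightarrow> additive C \<and>
     \<comment> \<open>E is a class of kernel-cokernel pairs closed under isomorphism\<close>
     (\<forall>(i, d) \<in> E. kernel_cokernel_pair C i d) \<and>
     (\<forall>i d i' d' a b c. (i, d) \<in> E \<longrightarrow> kernel_cokernel_pair C i' d' \<longrightarrow>
        is_iso C a \<longrightarrow> is_iso C b \<longrightarrow> is_iso C c \<longrightarrow>
        Dom C a = Dom C i \<longrightarrow> Cod C a = Dom C i' \<longrightarrow>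
        Dom C b = Cod C i \<longrightarrow> Cod C b = Cod C i' \<longrightarrow>
        Dom C c = Cod C d \<longrightarrow> Cod C c = Cod C d' \<longrightarrow>
        Comp C b i = Comp C i' a \<longrightarrow> Comp C c d = Comp C d' b \<longrightarrow> (i', d') \<in> E) \<and>
     \<comment> \<open>E0, E0op\<close>
     (\<forall>a \<in> Obj C. adm_monic C E (Id C a) \<and> adm_epic C E (Id C a)) \<and>
     \<comment> \<open>E1, E1op\<close>
     (\<forall>i j. adm_monic C E i \<longrightarrow> adm_monic C E j \<longrightarrow> Cod C i = Dom C j \<longrightarrow>
        adm_monic C E (Comp C j i)) \<and>
     (\<forall>d e. adm_epic C E d \<longrightarrow> adm_epic C E e \<longrightarrow> Cod C d = Dom C e \<longrightarrow>
        adm_epic C E (Comp C e d)) \<and>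
     \<comment> \<open>E2: pushouts of admissible monics exist and are admissible monics\<close>
     (\<forall>i f. adm_monic C E i \<longrightarrow> f \<in> Mor C \<longrightarrow> Dom C f = Dom C i \<longrightarrow>
        (\<exists>i' f'. is_pushout C i f i' f' \<and> adm_monic C E i')) \<and>
     \<comment> \<open>E2op: pullbacks of admissible epics exist and are admissible epics\<close>
     (\<forall>d f. adm_epic C E d \<longrightarrow> f \<in> Mor C \<longrightarrow> Cod C f = Cod C d \<longrightarrow>
        (\<exists>d' f'. is_pullback C d f d' f' \<and> adm_epic C E d'))"

definition E_chain :: "('o, 'm, 'x) addcat_scheme \<Rightarrow> ('m \<times> 'm) set \<Rightarrow> 'o \<Rightarrow> nat \<Rightarrow> bool" where
  "E_chain C E X n \<longleftrightarrow> (\<exists>(Xs :: nat \<Rightarrow> 'o) (ms :: nat \<Rightarrow> 'm).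
     zero_obj C (Xs 0) \<and> Xs n = X \<and>
     (\<forall>k < n. adm_monic C E (ms k) \<and> Dom C (ms k) = Xs k \<and> Cod C (ms k) = Xs (Suc k) \<and>
              \<not> is_iso C (ms k)))"

definition E_length :: "('o, 'm, 'x) addcat_scheme \<Rightarrow> ('m \<times> 'm) set \<Rightarrow> 'o \<Rightarrow> enat" where
  "E_length C E X = (SUP n \<in> {n. E_chain C E X n}. enat n)"

definition E_finite :: "('o, 'm, 'x) addcat_scheme \<Rightarrow> ('m \<times> 'm) set \<Rightarrow> 'o \<Rightarrow> bool" where
  "E_finite C E X \<longleftrightarrow> E_length C E X < \<infinity>"

end

theory Submission imports Defs begin

lemma enat_sup_attained:
  assumes "S \<noteq> {}" "(SUP n\<in>S. enat n) < \<infinity>"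
  shows "\<exists>n\<in>S. (SUP n\<in>S. enat n) = enat n"
proof -
  have fin: "finite (enat ` S)"
  proof (rule ccontr)
    assume "\<not> finite (enat ` S)"
    then have "(SUP n\<in>S. enat n) = \<infinity>" using assms(1) by (simp add: Sup_enat_def)
    with assms(2) show False by simp
  qed
  then have "(SUP n\<in>S. enat n) = Max (enat ` S)" using assms(1) by (simp add: Sup_enat_def)
  moreover have "Max (enat ` S) \<in> enat ` S" using fin assms(1) by (intro Max_in) auto
  ultimately show ?thesis by auto
qed

locale ecat =
  fixes C :: "('o, 'm) addcat" and E :: "('m \<times> 'm) set"
  assumes ec: "exact_category C E"
begin

lemma ec_add: "additive C" using ec unfolding exact_category_def by (elim conjE) assumption
lemma ec_pre: "preadditive C" using ec_add unfolding additive_def by (elim conjE) assumption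
lemma ec_cat: "category C" using ec_pre unfolding preadditive_def by (elim conjE) assumption
lemma ec_kc: assumes a: "(i,d) \<in> E" shows "kernel_cokernel_pair C i d"
proof -
  have "\<forall>(i, d) \<in> E. kernel_cokernel_pair C i d" using ec unfolding exact_category_def by (elim conjE) assumption
  then have "\<forall>p \<in> E. kernel_cokernel_pair C (fst p) (snd p)" by (simp add: case_prod_beta)
  then have "kernel_cokernel_pair C (fst (i,d)) (snd (i,d))" using a by (rule bspec)
  then show ?thesis by simp
qed
lemma ec_ker: "(i,d) \<in> E \<Longrightarrow> is_kernel C i d" using ec_kc unfolding kernel_cokernel_pair_def by (rule conjunct1)
lemma ec_coker: "(i,d) \<in> E \<Longrightarrow> is_cokernel C d i" using ec_kc unfolding kernel_cokernel_pair_def by (rule conjunct2)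
lemma ec_isoclosed:
  "(i, d) \<in> E \<Longrightarrow> kernel_cokernel_pair C i' d' \<Longrightarrow>
        is_iso C a \<Longrightarrow> is_iso C b \<Longrightarrow> is_iso C c \<Longrightarrow>
        Dom C a = Dom C i \<Longrightarrow> Cod C a = Dom C i' \<Longrightarrow>
        Dom C b = Cod C i \<Longrightarrow> Cod C b = Cod C i' \<Longrightarrow>
        Dom C c = Cod C d \<Longrightarrow> Cod C c = Cod C d' \<Longrightarrow>
        Comp C b i = Comp C i' a \<Longrightarrow> Comp C c d = Comp C d' b \<Longrightarrow> (i', d') \<in> E"
proof -
  have "\<forall>i d i' d' a b c. (i, d) \<in> E \<longrightarrow> kernel_cokernel_pair C i' d' \<longrightarrow>
        is_iso C a \<longrightarrow> is_iso C b \<longrightarrow> is_iso C c \<longrightarrow>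
        Dom C a = Dom C i \<longrightarrow> Cod C a = Dom C i' \<longrightarrow>
        Dom C b = Cod C i \<longrightarrow> Cod C b = Cod C i' \<longrightarrow>
        Dom C c = Cod C d \<longrightarrow> Cod C c = Cod C d' \<longrightarrow>
        Comp C b i = Comp C i' a \<longrightarrow> Comp C c d = Comp C d' b \<longrightarrow> (i', d') \<in> E"
    using ec unfolding exact_category_def by (elim conjE) assumption
  then show "(i, d) \<in> E \<Longrightarrow> kernel_cokernel_pair C i' d' \<Longrightarrow>
        is_iso C a \<Longrightarrow> is_iso C b \<Longrightarrow> is_iso C c \<Longrightarrow>
        Dom C a = Dom C i \<Longrightarrow> Cod C a = Dom C i' \<Longrightarrow>
        Dom C b = Cod C i \<Longrightarrow> Cod C b = Cod C i' \<Longrightarrow>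
        Dom C c = Cod C d \<Longrightarrow> Cod C c = Cod C d' \<Longrightarrow>
        Comp C b i = Comp C i' a \<Longrightarrow> Comp C c d = Comp C d' b \<Longrightarrow> (i', d') \<in> E"
    by blast
qed
lemma ec_E0op: "a \<in> Obj C \<Longrightarrow> adm_epic C E (Id C a)"
proof -
  have "\<forall>a \<in> Obj C. adm_monic C E (Id C a) \<and> adm_epic C E (Id C a)"
    using ec unfolding exact_category_def by (elim conjE) assumption
  then show "a \<in> Obj C \<Longrightarrow> adm_epic C E (Id C a)" by blast
qed
lemma ec_E1: "adm_monic C E i \<Longrightarrow> adm_monic C E j \<Longrightarrow> Cod C i = Dom C j \<Longrightarrow> adm_monic C E (Comp C j i)"
proof -
  have "\<forall>i j. adm_monic C E i \<longrightarrow> adm_monic C E j \<longrightarrow> Cod C i = Dom C j \<longrightarrow>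
        adm_monic C E (Comp C j i)"
    using ec unfolding exact_category_def by (elim conjE) assumption
  then show "adm_monic C E i \<Longrightarrow> adm_monic C E j \<Longrightarrow> Cod C i = Dom C j \<Longrightarrow> adm_monic C E (Comp C j i)" by blast
qed
lemma ec_E1op: "adm_epic C E d \<Longrightarrow> adm_epic C E e \<Longrightarrow> Cod C d = Dom C e \<Longrightarrow> adm_epic C E (Comp C e d)"
proof -
  have "\<forall>d e. adm_epic C E d \<longrightarrow> adm_epic C E e \<longrightarrow> Cod C d = Dom C e \<longrightarrow>
        adm_epic C E (Comp C e d)"
    using ec unfolding exact_category_def by (elim conjE) assumption
  then show "adm_epic C E d \<Longrightarrow> adm_epic C E e \<Longrightarrow> Cod C d = Dom C e \<Longrightarrow> adm_epic C E (Comp C e d)" by blast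
qed
lemma ec_E2op: "adm_epic C E d \<Longrightarrow> f \<in> Mor C \<Longrightarrow> Cod C f = Cod C d \<Longrightarrow>
        (\<exists>d' f'. is_pullback C d f d' f' \<and> adm_epic C E d')"
proof -
  have "\<forall>d f. adm_epic C E d \<longrightarrow> f \<in> Mor C \<longrightarrow> Cod C f = Cod C d \<longrightarrow>
        (\<exists>d' f'. is_pullback C d f d' f' \<and> adm_epic C E d')"
    using ec unfolding exact_category_def by (elim conjE) assumption
  then show "adm_epic C E d \<Longrightarrow> f \<in> Mor C \<Longrightarrow> Cod C f = Cod C d \<Longrightarrow>
        (\<exists>d' f'. is_pullback C d f d' f' \<and> adm_epic C E d')" by blast
qed

lemma hom_obj: "f \<in> hom C a b \<Longrightarrow> a \<in> Obj C \<and> b \<in> Obj C"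
  using ec_cat unfolding category_def hom_def by auto
lemma mor_hom: "f \<in> Mor C \<Longrightarrow> f \<in> hom C (Dom C f) (Cod C f)"
  unfolding hom_def by auto
lemma comp_hom: "f \<in> hom C a b \<Longrightarrow> g \<in> hom C b c \<Longrightarrow> Comp C g f \<in> hom C a c"
  using ec_cat unfolding category_def hom_def by auto
lemma id_hom: "a \<in> Obj C \<Longrightarrow> Id C a \<in> hom C a a"
  using ec_cat unfolding category_def by auto
lemma comp_id_r: "f \<in> hom C a b \<Longrightarrow> Comp C f (Id C a) = f"
  using ec_cat unfolding category_def hom_def by auto
lemma comp_id_l: "f \<in> hom C a b \<Longrightarrow> Comp C (Id C b) f = f"
  using ec_cat unfolding category_def hom_def by auto
lemma comp_assoc: "f \<in> hom C a b \<Longrightarrow> g \<in> hom C b c \<Longrightarrow> h \<in> hom C c d \<Longrightarrow>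
   Comp C h (Comp C g f) = Comp C (Comp C h g) f"
  using ec_cat unfolding category_def hom_def by auto

lemma zm_hom: "a \<in> Obj C \<Longrightarrow> b \<in> Obj C \<Longrightarrow> Zm C a b \<in> hom C a b"
  using ec_pre unfolding preadditive_def by blast

lemma idem_zero:
  assumes "x \<in> hom C a b" "Add C x x = x"
  shows "x = Zm C a b"
proof -
  have ob: "a \<in> Obj C" "b \<in> Obj C" using hom_obj assms by auto
  have ax: "\<forall>f \<in> hom C a b. \<forall>g \<in> hom C a b. \<forall>h \<in> hom C a b.
            Add C (Add C f g) h = Add C f (Add C g h)"
   and nx: "\<forall>f \<in> hom C a b. Neg C f \<in> hom C a b"
   and zx: "\<forall>f \<in> hom C a b. Add C f (Zm C a b) = f"
   and ix: "\<forall>f \<in> hom C a b. Add C f (Neg C f) = Zm C a b"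
    using ec_pre ob unfolding preadditive_def by blast+
  have "Add C (Add C x x) (Neg C x) = Add C x (Add C x (Neg C x))"
    using ax nx assms(1) by blast
  then have "Add C x (Neg C x) = Add C x (Zm C a b)" using assms ix by simp
  then show ?thesis using assms(1) ix zx by simp
qed

lemma comp_zero_r:
  assumes "g \<in> hom C b c" "a \<in> Obj C"
  shows "Comp C g (Zm C a b) = Zm C a c"
proof -
  have ob: "b \<in> Obj C" "c \<in> Obj C" using hom_obj assms by auto
  have z: "Zm C a b \<in> hom C a b" using zm_hom ob assms by auto
  have zz: "Add C (Zm C a b) (Zm C a b) = Zm C a b" using ec_pre ob assms z unfolding preadditive_def by blast
  have "Comp C g (Add C (Zm C a b) (Zm C a b)) = Add C (Comp C g (Zm C a b)) (Comp C g (Zm C a b))"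
    using ec_pre ob assms z unfolding preadditive_def by blast
  then have "Add C (Comp C g (Zm C a b)) (Comp C g (Zm C a b)) = Comp C g (Zm C a b)" using zz by simp
  then show ?thesis using idem_zero comp_hom z assms by blast
qed

lemma comp_zero_l:
  assumes "f \<in> hom C a b" "c \<in> Obj C"
  shows "Comp C (Zm C b c) f = Zm C a c"
proof -
  have ob: "a \<in> Obj C" "b \<in> Obj C" using hom_obj assms by auto
  have z: "Zm C b c \<in> hom C b c" using zm_hom ob assms by auto
  have zz: "Add C (Zm C b c) (Zm C b c) = Zm C b c" using ec_pre ob assms z unfolding preadditive_def by blast
  have "Comp C (Add C (Zm C b c) (Zm C b c)) f = Add C (Comp C (Zm C b c) f) (Comp C (Zm C b c) f)"
    using ec_pre ob assms z unfolding preadditive_def by blast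
  then have "Add C (Comp C (Zm C b c) f) (Comp C (Zm C b c) f) = Comp C (Zm C b c) f" using zz by simp
  then show ?thesis using idem_zero comp_hom z assms by blast
qed

lemma ker_homs: "is_kernel C i d \<Longrightarrow> i \<in> hom C (Dom C i) (Dom C d) \<and> d \<in> hom C (Dom C d) (Cod C d)"
  unfolding is_kernel_def hom_def by auto
lemma coker_homs: "is_cokernel C d i \<Longrightarrow> i \<in> hom C (Dom C i) (Dom C d) \<and> d \<in> hom C (Dom C d) (Cod C d)"
  unfolding is_cokernel_def hom_def by auto

lemma ker_univ:
  assumes "is_kernel C i d" "t \<in> Obj C" "h \<in> hom C t (Dom C d)" "Comp C d h = Zm C t (Cod C d)"
  shows "\<exists>!u. u \<in> hom C t (Dom C i) \<and> Comp C i u = h"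
proof -
  have "\<forall>t \<in> Obj C. \<forall>h \<in> hom C t (Dom C d). Comp C d h = Zm C t (Cod C d) \<longrightarrow>
        (\<exists>!u. u \<in> hom C t (Dom C i) \<and> Comp C i u = h)"
    using assms(1) unfolding is_kernel_def by (elim conjE) assumption
  then show ?thesis using assms(2-4) by blast
qed
lemma ker_zero: "is_kernel C i d \<Longrightarrow> Comp C d i = Zm C (Dom C i) (Cod C d)"
  unfolding is_kernel_def by (elim conjE) assumption
lemma coker_univ:
  assumes "is_cokernel C d i" "t \<in> Obj C" "h \<in> hom C (Cod C i) t" "Comp C h i = Zm C (Dom C i) t"
  shows "\<exists>!u. u \<in> hom C (Cod C d) t \<and> Comp C u d = h"
proof -
  have "\<forall>t \<in> Obj C. \<forall>h \<in> hom C (Cod C i) t. Comp C h i = Zm C (Dom C i) t \<longrightarrow>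
        (\<exists>!u. u \<in> hom C (Cod C d) t \<and> Comp C u d = h)"
    using assms(1) unfolding is_cokernel_def by (elim conjE) assumption
  then show ?thesis using assms(2-4) by blast
qed
lemma coker_zero: "is_cokernel C d i \<Longrightarrow> Comp C d i = Zm C (Dom C i) (Cod C d)"
  unfolding is_cokernel_def by (elim conjE) assumption

lemma ker_mono:
  assumes k: "is_kernel C i d" and u: "u \<in> hom C t (Dom C i)" and v: "v \<in> hom C t (Dom C i)"
    and eq: "Comp C i u = Comp C i v"
  shows "u = v"
proof -
  have hi: "i \<in> hom C (Dom C i) (Dom C d)" and hd: "d \<in> hom C (Dom C d) (Cod C d)"
    using ker_homs[OF k] by auto
  have t: "t \<in> Obj C" using hom_obj u by auto
  have h: "Comp C i u \<in> hom C t (Dom C d)" using comp_hom[OF u hi] .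
  have "Comp C d (Comp C i u) = Comp C (Comp C d i) u" using comp_assoc[OF u hi hd] .
  also have "\<dots> = Comp C (Zm C (Dom C i) (Cod C d)) u" using ker_zero[OF k] by simp
  also have "\<dots> = Zm C t (Cod C d)" using comp_zero_l[OF u] hom_obj[OF hd] by simp
  finally have "\<exists>!w. w \<in> hom C t (Dom C i) \<and> Comp C i w = Comp C i u"
    by (rule ker_univ[OF k t h])
  then show ?thesis using u v eq unfolding Ex1_def by auto
qed

lemma ker_factor:
  assumes k: "is_kernel C i d" and h: "h \<in> hom C t (Dom C d)" and z: "Comp C d h = Zm C t (Cod C d)"
  shows "\<exists>u \<in> hom C t (Dom C i). Comp C i u = h"
proof -
  have t: "t \<in> Obj C" using hom_obj h by auto
  then show ?thesis using ker_univ[OF k t h z] by blast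
qed

lemma coker_epi:
  assumes k: "is_cokernel C d i" and u: "u \<in> hom C (Cod C d) t" and v: "v \<in> hom C (Cod C d) t"
    and eq: "Comp C u d = Comp C v d"
  shows "u = v"
proof -
  have hi: "i \<in> hom C (Dom C i) (Dom C d)" and hd: "d \<in> hom C (Dom C d) (Cod C d)"
    using coker_homs[OF k] by auto
  have t: "t \<in> Obj C" using hom_obj u by auto
  have h: "Comp C u d \<in> hom C (Cod C i) t" using comp_hom u hd hi unfolding hom_def by auto
  have "Comp C (Comp C u d) i = Comp C u (Comp C d i)" using comp_assoc[OF hi hd u] by simp
  also have "\<dots> = Comp C u (Zm C (Dom C i) (Cod C d))" using coker_zero[OF k] by simp
  also have "\<dots> = Zm C (Dom C i) t" using comp_zero_r[OF u] hom_obj[OF hi] by simp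
  finally have "\<exists>!w. w \<in> hom C (Cod C d) t \<and> Comp C w d = Comp C u d"
    by (rule coker_univ[OF k t h])
  then show ?thesis using u v eq unfolding Ex1_def by auto
qed

lemma iso_inv:
  assumes "is_iso C f" "f \<in> hom C a b"
  shows "\<exists>g \<in> hom C b a. Comp C g f = Id C a \<and> Comp C f g = Id C b"
  using assms unfolding is_iso_def hom_def by auto

lemma iso_intro:
  assumes "f \<in> hom C a b" "g \<in> hom C b a" "Comp C g f = Id C a" "Comp C f g = Id C b"
  shows "is_iso C f"
  using assms unfolding is_iso_def hom_def by auto

lemma iso_comp:
  assumes f: "f \<in> hom C a b" and g: "g \<in> hom C b c" and "is_iso C f" "is_iso C g"
  shows "is_iso C (Comp C g f)"
proof -
  obtain f' where f': "f' \<in> hom C b a" "Comp C f' f = Id C a" "Comp C f f' = Id C b"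
    using iso_inv assms by blast
  obtain g' where g': "g' \<in> hom C c b" "Comp C g' g = Id C b" "Comp C g g' = Id C c"
    using iso_inv assms by blast
  have "Comp C (Comp C f' g') (Comp C g f) = Comp C f' (Comp C g' (Comp C g f))"
    using comp_assoc[OF comp_hom[OF f g] g'(1) f'(1)] by simp
  also have "\<dots> = Comp C f' (Comp C (Comp C g' g) f)"
    using comp_assoc[OF f g g'(1)] by simp
  also have "\<dots> = Id C a" using g' f' f comp_id_l by simp
  finally have 1: "Comp C (Comp C f' g') (Comp C g f) = Id C a" .
  have "Comp C (Comp C g f) (Comp C f' g') = Comp C g (Comp C f (Comp C f' g'))"
    using comp_assoc[OF comp_hom[OF g'(1) f'(1)] f g] by simp
  also have "\<dots> = Comp C g (Comp C (Comp C f f') g')"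
    using comp_assoc[OF g'(1) f'(1) f] by simp
  also have "\<dots> = Id C c" using g' f' g comp_id_l by simp
  finally have 2: "Comp C (Comp C g f) (Comp C f' g') = Id C c" .
  show ?thesis using iso_intro[OF comp_hom[OF f g] comp_hom[OF g'(1) f'(1)] 1 2] .
qed

lemma iso_id: "a \<in> Obj C \<Longrightarrow> is_iso C (Id C a)"
  using iso_intro[OF id_hom id_hom] comp_id_l[OF id_hom] by blast

lemma zero_unique_out: "zero_obj C z \<Longrightarrow> u \<in> hom C z t \<Longrightarrow> v \<in> hom C z t \<Longrightarrow> u = v"
  unfolding zero_obj_def using hom_obj by blast
lemma zero_unique_in: "zero_obj C z \<Longrightarrow> u \<in> hom C t z \<Longrightarrow> v \<in> hom C t z \<Longrightarrow> u = v"
  unfolding zero_obj_def using hom_obj by blast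

lemma zero_iso:
  assumes z: "zero_obj C a" and g: "g \<in> hom C a b" and h: "h \<in> hom C b a"
    and gh: "Comp C h g = Id C a" and hg: "Comp C g h = Id C b"
  shows "zero_obj C b"
  unfolding zero_obj_def
proof (intro conjI ballI)
  show b: "b \<in> Obj C" using hom_obj g by auto
  fix t assume t: "t \<in> Obj C"
  show "\<exists>!f. f \<in> hom C b t"
  proof
    show "Zm C b t \<in> hom C b t" using zm_hom b t by auto
    fix f assume f: "f \<in> hom C b t"
    have "Comp C f g = Comp C (Zm C b t) g"
      using zero_unique_out[OF z comp_hom[OF g f] comp_hom[OF g zm_hom[OF b t]]] .
    then have "Comp C (Comp C f g) h = Comp C (Comp C (Zm C b t) g) h" by simp
    then have "Comp C f (Comp C g h) = Comp C (Zm C b t) (Comp C g h)"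
      using comp_assoc[OF h g f] comp_assoc[OF h g zm_hom[OF b t]] by simp
    then show "f = Zm C b t" using hg comp_id_r[OF f] comp_id_r[OF zm_hom[OF b t]] by simp
  qed
  show "\<exists>!f. f \<in> hom C t b"
  proof
    show "Zm C t b \<in> hom C t b" using zm_hom b t by auto
    fix f assume f: "f \<in> hom C t b"
    have "Comp C h f = Comp C h (Zm C t b)"
      using zero_unique_in[OF z comp_hom[OF f h] comp_hom[OF zm_hom[OF t b] h]] .
    then have "Comp C g (Comp C h f) = Comp C g (Comp C h (Zm C t b))" by simp
    then have "Comp C (Comp C g h) f = Comp C (Comp C g h) (Zm C t b)"
      using comp_assoc[OF f h g] comp_assoc[OF zm_hom[OF t b] h g] by simp
    then show "f = Zm C t b" using hg comp_id_l[OF f] comp_id_l[OF zm_hom[OF t b]] by simp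
  qed
qed

lemma ker_iso:
  assumes k: "is_kernel C i d" and k': "is_kernel C i' d"
  shows "\<exists>a \<in> hom C (Dom C i') (Dom C i). is_iso C a \<and> Comp C i a = i'"
proof -
  have hi: "i \<in> hom C (Dom C i) (Dom C d)" and hd: "d \<in> hom C (Dom C d) (Cod C d)"
    using ker_homs[OF k] by auto
  have hi': "i' \<in> hom C (Dom C i') (Dom C d)" using ker_homs[OF k'] by auto
  obtain a where a: "a \<in> hom C (Dom C i') (Dom C i)" "Comp C i a = i'"
    using ker_factor[OF k hi' ker_zero[OF k']] by blast
  obtain b where b: "b \<in> hom C (Dom C i) (Dom C i')" "Comp C i' b = i"
    using ker_factor[OF k' hi ker_zero[OF k]] by blast
  have "Comp C i (Comp C a b) = Comp C i (Id C (Dom C i))"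
    using comp_assoc[OF b(1) a(1) hi] a(2) b(2) comp_id_r[OF hi] by simp
  then have ab: "Comp C a b = Id C (Dom C i)"
    using ker_mono[OF k comp_hom[OF b(1) a(1)] id_hom[OF conjunct1[OF hom_obj[OF hi]]]] by simp
  have "Comp C i' (Comp C b a) = Comp C i' (Id C (Dom C i'))"
    using comp_assoc[OF a(1) b(1) hi'] a(2) b(2) comp_id_r[OF hi'] by simp
  then have ba: "Comp C b a = Id C (Dom C i')"
    using ker_mono[OF k' comp_hom[OF a(1) b(1)] id_hom[OF conjunct1[OF hom_obj[OF hi']]]] by simp
  show ?thesis using iso_intro[OF a(1) b(1) ba ab] a by blast
qed

lemma E_homs: "(i,d) \<in> E \<Longrightarrow> i \<in> hom C (Dom C i) (Dom C d) \<and> d \<in> hom C (Dom C d) (Cod C d)"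
  using ker_homs[OF ec_ker] by blast

lemma E_precomp_iso:
  assumes id: "(i,d) \<in> E" and a: "a \<in> hom C A (Dom C i)" and ia: "is_iso C a"
  shows "(Comp C i a, d) \<in> E"
proof -
  have k: "is_kernel C i d" and ck: "is_cokernel C d i" using ec_ker[OF id] ec_coker[OF id] by auto
  have hi: "i \<in> hom C (Dom C i) (Dom C d)" and hd: "d \<in> hom C (Dom C d) (Cod C d)"
    using ker_homs[OF k] by auto
  obtain a' where a': "a' \<in> hom C (Dom C i) A" "Comp C a' a = Id C A" "Comp C a a' = Id C (Dom C i)"
    using iso_inv[OF ia a] by blast
  define i' where "i' = Comp C i a"
  have hi': "i' \<in> hom C A (Dom C d)" unfolding i'_def using comp_hom[OF a hi] .
  have oA: "A \<in> Obj C" and oDi: "Dom C i \<in> Obj C" using hom_obj[OF a] by auto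
  have oCd: "Cod C d \<in> Obj C" using hom_obj[OF hd] by auto
  have ii': "Comp C i' a' = i"
    unfolding i'_def using comp_assoc[OF a'(1) a hi] a'(3) comp_id_r[OF hi] by simp
  have z: "Comp C d i' = Zm C A (Cod C d)"
    unfolding i'_def using comp_assoc[OF a hi hd] ker_zero[OF k] comp_zero_l[OF a oCd] by simp
  have domi': "Dom C i' = A" and codi': "Cod C i' = Dom C d" and mori': "i' \<in> Mor C"
    using hi' unfolding hom_def by auto
  have kk: "is_kernel C i' d"
    unfolding is_kernel_def
  proof (intro conjI ballI impI)
    show "i' \<in> Mor C" by (rule mori')
    show "d \<in> Mor C" using hd unfolding hom_def by auto
    show "Cod C i' = Dom C d" by (rule codi')
    show "Comp C d i' = Zm C (Dom C i') (Cod C d)" using z domi' by simp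
    fix t h assume t: "t \<in> Obj C" and h: "h \<in> hom C t (Dom C d)" and hz: "Comp C d h = Zm C t (Cod C d)"
    obtain u0 where u0: "u0 \<in> hom C t (Dom C i)" "Comp C i u0 = h" using ker_factor[OF k h hz] by blast
    show "\<exists>!u. u \<in> hom C t (Dom C i') \<and> Comp C i' u = h"
    proof (rule ex1I)
      show "Comp C a' u0 \<in> hom C t (Dom C i') \<and> Comp C i' (Comp C a' u0) = h"
        using comp_hom[OF u0(1) a'(1)] domi' comp_assoc[OF u0(1) a'(1) hi'] ii' u0(2) by simp
    next
      fix y assume y: "y \<in> hom C t (Dom C i') \<and> Comp C i' y = h"
      have y1: "y \<in> hom C t A" using y domi' by simp
      have "Comp C i (Comp C a y) = Comp C i u0"
        using comp_assoc[OF y1 a hi] y u0(2) unfolding i'_def by simp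
      then have "Comp C a y = u0" using ker_mono[OF k comp_hom[OF y1 a] u0(1)] by simp
      then have "Comp C a' (Comp C a y) = Comp C a' u0" by simp
      then show "y = Comp C a' u0" using comp_assoc[OF y1 a a'(1)] a'(2) comp_id_l[OF y1] by simp
    qed
  qed
  have cc: "is_cokernel C d i'"
    unfolding is_cokernel_def
  proof (intro conjI ballI impI)
    show "i' \<in> Mor C" by (rule mori')
    show "d \<in> Mor C" using hd unfolding hom_def by auto
    show "Cod C i' = Dom C d" by (rule codi')
    show "Comp C d i' = Zm C (Dom C i') (Cod C d)" using z domi' by simp
    fix t h assume t: "t \<in> Obj C" and h: "h \<in> hom C (Cod C i') t" and hz: "Comp C h i' = Zm C (Dom C i') t"
    have h': "h \<in> hom C (Dom C d) t" using h codi' by simp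
    have "Comp C h i = Comp C (Comp C h i') a'"
      using comp_assoc[OF a'(1) hi' h'] ii' by simp
    also have "\<dots> = Zm C (Dom C i) t" using hz domi' comp_zero_l[OF a'(1) t] by simp
    finally have hz2: "Comp C h i = Zm C (Dom C i) t" .
    have h2: "h \<in> hom C (Cod C i) t" using h' hi unfolding hom_def by auto
    show "\<exists>!u. u \<in> hom C (Cod C d) t \<and> Comp C u d = h"
      by (rule coker_univ[OF ck t h2 hz2])
  qed
  obtain a'' where "a'' = a'" by simp
  have isoa': "is_iso C a'" using iso_intro[OF a'(1) a a'(3) a'(2)] .
  have codi: "Cod C i = Dom C d" using hi unfolding hom_def by simp
  have oDd: "Dom C d \<in> Obj C" using hom_obj[OF hd] by auto
  show ?thesis unfolding i'_def[symmetric]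
  proof (rule ec_isoclosed[OF id _ isoa' iso_id[OF oDd] iso_id[OF oCd]])
    show "kernel_cokernel_pair C i' d" unfolding kernel_cokernel_pair_def using kk cc by simp
    show "Dom C a' = Dom C i" using a'(1) unfolding hom_def by simp
    show "Cod C a' = Dom C i'" using a'(1) domi' unfolding hom_def by simp
    show "Dom C (Id C (Dom C d)) = Cod C i" using id_hom[OF oDd] codi unfolding hom_def by simp
    show "Cod C (Id C (Dom C d)) = Cod C i'" using id_hom[OF oDd] codi' unfolding hom_def by simp
    show "Dom C (Id C (Cod C d)) = Cod C d" using id_hom[OF oCd] unfolding hom_def by simp
    show "Cod C (Id C (Cod C d)) = Cod C d" using id_hom[OF oCd] unfolding hom_def by simp
    show "Comp C (Id C (Dom C d)) i = Comp C i' a'" using comp_id_l[OF hi] ii' by simp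
    show "Comp C (Id C (Cod C d)) d = Comp C d (Id C (Dom C d))" using comp_id_l[OF hd] comp_id_r[OF hd] by simp
  qed
qed

lemma pb_univ:
  assumes pb: "is_pullback C d f d' f'" and t: "t \<in> Obj C"
    and u: "u \<in> hom C t (Dom C f)" and v: "v \<in> hom C t (Dom C d)" and eq: "Comp C f u = Comp C d v"
  shows "\<exists>!w. w \<in> hom C t (Dom C d') \<and> Comp C d' w = u \<and> Comp C f' w = v"
proof -
  have "\<forall>t \<in> Obj C. \<forall>u \<in> hom C t (Dom C f). \<forall>v \<in> hom C t (Dom C d).
        Comp C f u = Comp C d v \<longrightarrow>
        (\<exists>!w. w \<in> hom C t (Dom C d') \<and> Comp C d' w = u \<and> Comp C f' w = v)"
    using pb unfolding is_pullback_def by (elim conjE) assumption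
  then show ?thesis using t u v eq by blast
qed

lemma pb_basic:
  assumes pb: "is_pullback C d f d' f'"
  shows "d \<in> Mor C \<and> f \<in> Mor C \<and> d' \<in> Mor C \<and> f' \<in> Mor C \<and>
     Cod C d = Cod C f \<and> Cod C d' = Dom C f \<and> Cod C f' = Dom C d \<and> Dom C d' = Dom C f' \<and>
     Comp C d f' = Comp C f d'"
  using pb unfolding is_pullback_def by (elim conjE) (intro conjI; assumption)

lemma monic_epi_iso:
  assumes mq: "(m,q) \<in> E" and m: "m \<in> hom C Z' Z" and ck: "is_cokernel C e k"
    and e: "e \<in> hom C Y Z" and v: "v \<in> hom C Y Z'" and ev: "e = Comp C m v"
  shows "is_iso C m"
proof -
  have km: "is_kernel C m q" using ec_ker[OF mq] .
  have hq: "q \<in> hom C Z (Cod C q)" using ker_homs[OF km] m unfolding hom_def by auto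
  have oQ: "Cod C q \<in> Obj C" and oZ: "Z \<in> Obj C" using hom_obj[OF hq] by auto
  have oY: "Y \<in> Obj C" and oZ': "Z' \<in> Obj C" using hom_obj[OF e] hom_obj[OF m] by auto
  have dm: "Dom C m = Z'" using m unfolding hom_def by simp
  have "Comp C q e = Comp C (Comp C q m) v" using ev comp_assoc[OF v m hq] by simp
  also have "\<dots> = Zm C Y (Cod C q)" using ker_zero[OF km] dm comp_zero_l[OF v oQ] by simp
  also have "\<dots> = Comp C (Zm C Z (Cod C q)) e" using comp_zero_l[OF e oQ] by simp
  finally have qe: "Comp C q e = Comp C (Zm C Z (Cod C q)) e" .
  have ce: "Cod C e = Z" using e unfolding hom_def by simp
  have q0: "q = Zm C Z (Cod C q)"
    using coker_epi[OF ck, of q "Cod C q" "Zm C Z (Cod C q)"] hq zm_hom[OF oZ oQ] ce qe by simp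
  have idZ: "Id C Z \<in> hom C Z (Dom C q)" using id_hom[OF oZ] hq unfolding hom_def by auto
  have "Comp C q (Id C Z) = Zm C Z (Cod C q)" using comp_id_r[OF hq] q0 by simp
  then obtain u where u: "u \<in> hom C Z (Dom C m)" "Comp C m u = Id C Z"
    using ker_factor[OF km idZ] by blast
  have u': "u \<in> hom C Z Z'" using u dm by simp
  have "Comp C m (Comp C u m) = Comp C m (Id C Z')"
    using comp_assoc[OF m u' m] u(2) comp_id_l[OF m] comp_id_r[OF m] by simp
  then have "Comp C u m = Id C Z'"
    using ker_mono[OF km, of "Comp C u m" Z' "Id C Z'"] comp_hom[OF m u'] id_hom[OF oZ'] dm by simp
  then show ?thesis using iso_intro[OF m u'] u(2) by simp
qed

lemma step:
  assumes ke: "(k,e) \<in> E" and m: "m \<in> hom C Z' Z" and am: "adm_monic C E m" and nm: "\<not> is_iso C m"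
    and e: "e \<in> hom C Y Z" and k: "k \<in> hom C X Y"
  shows "\<exists>P j k' e'. (k',e') \<in> E \<and> k' \<in> hom C X P \<and> e' \<in> hom C P Z' \<and> j \<in> hom C P Y
           \<and> adm_monic C E j \<and> \<not> is_iso C j"
proof -
  obtain q where mq: "(m,q) \<in> E" using am unfolding adm_monic_def by blast
  have km: "is_kernel C m q" using ec_ker[OF mq] .
  have kk: "is_kernel C k e" using ec_ker[OF ke] .
  have cke: "is_cokernel C e k" using ec_coker[OF ke] .
  define Q where "Q = Cod C q"
  have hq: "q \<in> hom C Z Q" using ker_homs[OF km] m unfolding hom_def Q_def by auto
  have dm: "Dom C m = Z'" and cm: "Cod C m = Z" using m unfolding hom_def by auto
  have de: "Dom C e = Y" and ce: "Cod C e = Z" using e unfolding hom_def by auto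
  have dk: "Dom C k = X" using k unfolding hom_def by auto
  have oX: "X \<in> Obj C" and oY: "Y \<in> Obj C" using hom_obj[OF k] by auto
  have oZ: "Z \<in> Obj C" and oQ: "Q \<in> Obj C" using hom_obj[OF hq] by auto
  have oZ': "Z' \<in> Obj C" using hom_obj[OF m] by auto
  have ae: "adm_epic C E e" using ke unfolding adm_epic_def by blast
  have aq: "adm_epic C E q" using mq unfolding adm_epic_def by blast
  have dq: "Dom C q = Z" using hq unfolding hom_def by simp
  have "adm_epic C E (Comp C q e)" using ec_E1op[OF ae aq] ce dq by simp
  then obtain j where jq: "(j, Comp C q e) \<in> E" unfolding adm_epic_def by blast
  have kj: "is_kernel C j (Comp C q e)" using ec_ker[OF jq] .
  define Y' where "Y' = Dom C j"
  have hqe: "Comp C q e \<in> hom C Y Q" using comp_hom[OF e hq] .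
  have hj: "j \<in> hom C Y' Y" using ker_homs[OF kj] hqe unfolding Y'_def hom_def by auto
  have mm: "m \<in> Mor C" using m unfolding hom_def by simp
  obtain d' f' where pb: "is_pullback C e m d' f'" and ad': "adm_epic C E d'"
    using ec_E2op[OF ae mm] cm ce by auto
  have pbb: "d' \<in> Mor C \<and> f' \<in> Mor C \<and> Cod C d' = Z' \<and> Cod C f' = Y \<and> Dom C d' = Dom C f' \<and>
     Comp C e f' = Comp C m d'" using pb_basic[OF pb] dm de by simp
  define P where "P = Dom C d'"
  have hd': "d' \<in> hom C P Z'" and hf': "f' \<in> hom C P Y" and sq: "Comp C e f' = Comp C m d'"
    using pbb unfolding hom_def P_def by auto
  have oP: "P \<in> Obj C" and oY': "Y' \<in> Obj C" using hom_obj[OF hd'] hom_obj[OF hj] by auto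
  have hej: "Comp C e j \<in> hom C Y' Z" using comp_hom[OF hj e] .
  have "Comp C q (Comp C e j) = Comp C (Comp C q e) j" using comp_assoc[OF hj e hq] .
  also have "\<dots> = Zm C Y' Q" using ker_zero[OF kj] hqe unfolding Y'_def Q_def hom_def by simp
  finally have "Comp C q (Comp C e j) = Zm C Y' (Cod C q)" unfolding Q_def .
  moreover have hej': "Comp C e j \<in> hom C Y' (Dom C q)" using hej dq by simp
  ultimately obtain e'' where e'': "e'' \<in> hom C Y' Z'" "Comp C m e'' = Comp C e j"
    using ker_factor[OF km hej'] dm by auto
  have "\<exists>!w. w \<in> hom C Y' (Dom C d') \<and> Comp C d' w = e'' \<and> Comp C f' w = j"
    using pb_univ[OF pb oY', of e'' j] e'' hj dm de by simp
  then obtain phi where phi: "phi \<in> hom C Y' P" "Comp C d' phi = e''" "Comp C f' phi = j"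
    unfolding P_def by (auto simp: Ex1_def)
  have "Comp C (Comp C q e) f' = Comp C q (Comp C m d')" using comp_assoc[OF hf' e hq] sq by simp
  also have "\<dots> = Comp C (Comp C q m) d'" using comp_assoc[OF hd' m hq] .
  also have "\<dots> = Zm C P Q" using ker_zero[OF km] dm comp_zero_l[OF hd' oQ] unfolding Q_def by simp
  finally have "Comp C (Comp C q e) f' = Zm C P (Cod C (Comp C q e))" using hqe unfolding hom_def by simp
  then obtain psi where psi: "psi \<in> hom C P Y'" "Comp C j psi = f'"
    using ker_factor[OF kj, of f' P] hf' hqe unfolding hom_def Y'_def by auto
  have "Comp C j (Comp C psi phi) = Comp C j (Id C Y')"
    using comp_assoc[OF phi(1) psi(1) hj] psi(2) phi(3) comp_id_r[OF hj] by simp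
  then have psiphi: "Comp C psi phi = Id C Y'"
    using ker_mono[OF kj, of "Comp C psi phi" Y' "Id C Y'"] comp_hom[OF phi(1) psi(1)] id_hom[OF oY'] Y'_def by simp
  have "Comp C m (Comp C e'' psi) = Comp C m d'"
    using comp_assoc[OF psi(1) e''(1) m] e''(2) comp_assoc[OF psi(1) hj e] psi(2) sq by simp
  then have e''psi: "Comp C e'' psi = d'"
    using ker_mono[OF km, of "Comp C e'' psi" P d'] comp_hom[OF psi(1) e''(1)] hd' dm by simp
  have u1: "\<exists>!w. w \<in> hom C P (Dom C d') \<and> Comp C d' w = d' \<and> Comp C f' w = f'"
    using pb_univ[OF pb oP, of d' f'] hd' hf' dm de sq by simp
  have w1: "Comp C phi psi \<in> hom C P (Dom C d') \<and> Comp C d' (Comp C phi psi) = d' \<and> Comp C f' (Comp C phi psi) = f'"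
    using comp_hom[OF psi(1) phi(1)] P_def comp_assoc[OF psi(1) phi(1) hd'] phi(2) e''psi
      comp_assoc[OF psi(1) phi(1) hf'] phi(3) psi(2) by simp
  have w2: "Id C P \<in> hom C P (Dom C d') \<and> Comp C d' (Id C P) = d' \<and> Comp C f' (Id C P) = f'"
    using id_hom[OF oP] P_def comp_id_r[OF hd'] comp_id_r[OF hf'] by simp
  have phipsi: "Comp C phi psi = Id C P" using u1 w1 w2 unfolding Ex1_def by metis
  have isopsi: "is_iso C psi" using iso_intro[OF psi(1) phi(1) phipsi psiphi] .
  have "(Comp C j psi, Comp C q e) \<in> E"
    using E_precomp_iso[OF jq _ isopsi] psi(1) Y'_def by simp
  then have f'E: "(f', Comp C q e) \<in> E" using psi(2) by simp
  then have af': "adm_monic C E f'" unfolding adm_monic_def by blast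
  have kf': "is_kernel C f' (Comp C q e)" using ec_ker[OF f'E] .
  have nf': "\<not> is_iso C f'"
  proof
    assume "is_iso C f'"
    then obtain g where g: "g \<in> hom C Y P" "Comp C g f' = Id C P" "Comp C f' g = Id C Y"
      using iso_inv hf' by blast
    have "e = Comp C e (Comp C f' g)" using g(3) comp_id_r[OF e] by simp
    also have "\<dots> = Comp C m (Comp C d' g)"
      using comp_assoc[OF g(1) hf' e] sq comp_assoc[OF g(1) hd' m] by simp
    finally have "e = Comp C m (Comp C d' g)" .
    then have "is_iso C m" using monic_epi_iso[OF mq m cke e comp_hom[OF g(1) hd']] by simp
    then show False using nm by simp
  qed
  have zk: "Comp C e k = Zm C X Z" using ker_zero[OF kk] dk ce by simp
  have z0: "Comp C m (Zm C X Z') = Zm C X Z" using comp_zero_r[OF m oX] .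
  have "\<exists>!w. w \<in> hom C X (Dom C d') \<and> Comp C d' w = Zm C X Z' \<and> Comp C f' w = k"
    using pb_univ[OF pb oX, of "Zm C X Z'" k] zm_hom[OF oX oZ'] k dm de zk z0 by simp
  then obtain k' where k': "k' \<in> hom C X P" "Comp C d' k' = Zm C X Z'" "Comp C f' k' = k"
    unfolding P_def by (auto simp: Ex1_def)
  obtain k'' where k''E: "(k'', d') \<in> E" using ad' unfolding adm_epic_def by blast
  have kk'': "is_kernel C k'' d'" using ec_ker[OF k''E] .
  have kk': "is_kernel C k' d'"
    unfolding is_kernel_def
  proof (intro conjI ballI impI)
    show "k' \<in> Mor C" using k'(1) unfolding hom_def by simp
    show "d' \<in> Mor C" using pbb by simp
    show "Cod C k' = Dom C d'" using k'(1) unfolding hom_def P_def by simp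
    show "Comp C d' k' = Zm C (Dom C k') (Cod C d')" using k' pbb unfolding hom_def by simp
    fix t h assume t: "t \<in> Obj C" and h: "h \<in> hom C t (Dom C d')" and hz: "Comp C d' h = Zm C t (Cod C d')"
    have h': "h \<in> hom C t P" using h P_def by simp
    have fh: "Comp C f' h \<in> hom C t Y" using comp_hom[OF h' hf'] .
    have "Comp C e (Comp C f' h) = Comp C m (Comp C d' h)"
      using comp_assoc[OF h' hf' e] sq comp_assoc[OF h' hd' m] by simp
    also have "\<dots> = Zm C t Z" using hz pbb comp_zero_r[OF m t] by simp
    finally have "Comp C e (Comp C f' h) = Zm C t (Cod C e)" using ce by simp
    then obtain u where u: "u \<in> hom C t X" "Comp C k u = Comp C f' h"
      using ker_factor[OF kk, of "Comp C f' h" t] fh de dk by auto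
    show "\<exists>!u. u \<in> hom C t (Dom C k') \<and> Comp C k' u = h"
    proof (rule ex1I)
      have "Comp C f' (Comp C k' u) = Comp C f' h"
        using comp_assoc[OF u(1) k'(1) hf'] k'(3) u(2) by simp
      then have "Comp C k' u = h"
        using ker_mono[OF kf', of "Comp C k' u" t h] comp_hom[OF u(1) k'(1)] h' pbb P_def by simp
      then show "u \<in> hom C t (Dom C k') \<and> Comp C k' u = h" using u(1) k'(1) unfolding hom_def by simp
    next
      fix y assume y: "y \<in> hom C t (Dom C k') \<and> Comp C k' y = h"
      have y1: "y \<in> hom C t X" using y k'(1) unfolding hom_def by simp
      have "Comp C k y = Comp C k u"
        using comp_assoc[OF y1 k'(1) hf'] k'(3) y u(2) by simp
      then show "y = u" using ker_mono[OF kk, of y t u] y1 u(1) dk by simp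
    qed
  qed
  obtain a where a: "a \<in> hom C (Dom C k') (Dom C k'')" "is_iso C a" "Comp C k'' a = k'"
    using ker_iso[OF kk'' kk'] by blast
  have "(Comp C k'' a, d') \<in> E" using E_precomp_iso[OF k''E a(1) a(2)] .
  then have k'E: "(k', d') \<in> E" using a(3) by simp
  show ?thesis using k'E k'(1) hd' hf' af' nf' by blast
qed

lemma adm_monic_mor: "adm_monic C E m \<Longrightarrow> m \<in> Mor C"
  unfolding adm_monic_def using E_homs unfolding hom_def by blast

lemma descend:
  assumes ch: "\<forall>i<n. adm_monic C E (ms i) \<and> ms i \<in> hom C (Zs i) (Zs (Suc i)) \<and> \<not> is_iso C (ms i)"
  shows "(k,e) \<in> E \<Longrightarrow> k \<in> hom C X Y \<Longrightarrow> e \<in> hom C Y (Zs n) \<Longrightarrow>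
    \<exists>Y' k' e' Ws ns. (k',e') \<in> E \<and> k' \<in> hom C X Y' \<and> e' \<in> hom C Y' (Zs 0) \<and> Ws 0 = Y' \<and> Ws n = Y \<and>
      (\<forall>i<n. adm_monic C E (ns i) \<and> Dom C (ns i) = Ws i \<and> Cod C (ns i) = Ws (Suc i) \<and> \<not> is_iso C (ns i))"
  using ch
proof (induction n arbitrary: Y k e)
  case 0
  then show ?case by (rule_tac x=Y in exI, rule_tac x=k in exI, rule_tac x=e in exI,
      rule_tac x="\<lambda>_. Y" in exI) auto
next
  case (Suc n)
  have mn: "adm_monic C E (ms n)" "ms n \<in> hom C (Zs n) (Zs (Suc n))" "\<not> is_iso C (ms n)"
    using Suc.prems(4) by auto
  obtain P j k1 e1 where s: "(k1,e1) \<in> E" "k1 \<in> hom C X P" "e1 \<in> hom C P (Zs n)" "j \<in> hom C P Y"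
     "adm_monic C E j" "\<not> is_iso C j"
    using step[OF Suc.prems(1) mn(2) mn(1) mn(3) Suc.prems(3) Suc.prems(2)] by blast
  have ch': "\<forall>i<n. adm_monic C E (ms i) \<and> ms i \<in> hom C (Zs i) (Zs (Suc i)) \<and> \<not> is_iso C (ms i)"
    using Suc.prems(4) by auto
  obtain Y' k' e' Ws ns where ih: "(k',e') \<in> E" "k' \<in> hom C X Y'" "e' \<in> hom C Y' (Zs 0)" "Ws 0 = Y'"
      "Ws n = P" "\<forall>i<n. adm_monic C E (ns i) \<and> Dom C (ns i) = Ws i \<and> Cod C (ns i) = Ws (Suc i) \<and> \<not> is_iso C (ns i)"
    using Suc.IH[OF s(1) s(2) s(3) ch'] by blast
  define Ws' where "Ws' = Ws(Suc n := Y)"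
  define ns' where "ns' = ns(n := j)"
  have "\<forall>i<Suc n. adm_monic C E (ns' i) \<and> Dom C (ns' i) = Ws' i \<and> Cod C (ns' i) = Ws' (Suc i) \<and> \<not> is_iso C (ns' i)"
  proof (intro allI impI)
    fix i assume i: "i < Suc n"
    show "adm_monic C E (ns' i) \<and> Dom C (ns' i) = Ws' i \<and> Cod C (ns' i) = Ws' (Suc i) \<and> \<not> is_iso C (ns' i)"
    proof (cases "i = n")
      case True
      then show ?thesis using s(4-6) ih(5) unfolding Ws'_def ns'_def hom_def by simp
    next
      case False
      then have "i < n" using i by simp
      then show ?thesis using ih(6) unfolding Ws'_def ns'_def by simp
    qed
  qed
  moreover have "Ws' 0 = Y'" "Ws' (Suc n) = Y" using ih(4) unfolding Ws'_def by auto
  ultimately show ?case using ih(1-3) by blast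
qed

lemma ker_to_zero_iso:
  assumes ke: "(k,e) \<in> E" and k: "k \<in> hom C X Y" and e: "e \<in> hom C Y Z" and z: "zero_obj C Z"
  shows "\<exists>u \<in> hom C Y X. Comp C u k = Id C X \<and> Comp C k u = Id C Y"
proof -
  have kk: "is_kernel C k e" using ec_ker[OF ke] .
  have oY: "Y \<in> Obj C" and oX: "X \<in> Obj C" and oZ: "Z \<in> Obj C" using hom_obj[OF k] hom_obj[OF e] by auto
  have de: "Dom C e = Y" "Cod C e = Z" and dk: "Dom C k = X" using e k unfolding hom_def by auto
  have "Comp C e (Id C Y) = Zm C Y Z"
    using comp_id_r[OF e] zero_unique_in[OF z e zm_hom[OF oY oZ]] by simp
  then obtain u where u: "u \<in> hom C Y X" "Comp C k u = Id C Y"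
    using ker_factor[OF kk, of "Id C Y" Y] id_hom[OF oY] de dk by auto
  have "Comp C k (Comp C u k) = Comp C k (Id C X)"
    using comp_assoc[OF k u(1) k] u(2) comp_id_l[OF k] comp_id_r[OF k] by simp
  then have "Comp C u k = Id C X"
    using ker_mono[OF kk, of "Comp C u k" X "Id C X"] comp_hom[OF k u(1)] id_hom[OF oX] dk by simp
  then show ?thesis using u by blast
qed

lemma chain_transport:
  assumes ch: "E_chain C E X a" and k: "k \<in> hom C X Y" and ak: "adm_monic C E k"
    and u: "u \<in> hom C Y X" "Comp C u k = Id C X" "Comp C k u = Id C Y"
  shows "E_chain C E Y a"
proof -
  obtain Xs ms where c: "zero_obj C (Xs 0)" "Xs a = X"
    "\<forall>k < a. adm_monic C E (ms k) \<and> Dom C (ms k) = Xs k \<and> Cod C (ms k) = Xs (Suc k) \<and> \<not> is_iso C (ms k)"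
    using ch unfolding E_chain_def by blast
  show ?thesis
  proof (cases a)
    case 0
    then have "zero_obj C X" using c by simp
    then have "zero_obj C Y" using zero_iso[OF _ k u(1) u(2) u(3)] by simp
    then show ?thesis unfolding E_chain_def using 0
      by (rule_tac x="\<lambda>_. Y" in exI, rule_tac x=ms in exI) simp
  next
    case (Suc b)
    define Xs' where "Xs' = Xs(Suc b := Y)"
    define ms' where "ms' = ms(b := Comp C k (ms b))"
    have mb: "adm_monic C E (ms b)" "Dom C (ms b) = Xs b" "Cod C (ms b) = X" "\<not> is_iso C (ms b)"
      using c Suc by auto
    have hmb: "ms b \<in> hom C (Xs b) X" using adm_monic_mor[OF mb(1)] mb(2,3) unfolding hom_def by simp
    have dk: "Dom C k = X" "Cod C k = Y" using k unfolding hom_def by auto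
    have am': "adm_monic C E (Comp C k (ms b))" using ec_E1[OF mb(1) ak] mb(3) dk by simp
    have hc: "Comp C k (ms b) \<in> hom C (Xs b) Y" using comp_hom[OF hmb k] .
    have ni: "\<not> is_iso C (Comp C k (ms b))"
    proof
      assume i: "is_iso C (Comp C k (ms b))"
      have iu: "is_iso C u" using iso_intro[OF u(1) k u(3) u(2)] .
      have "is_iso C (Comp C u (Comp C k (ms b)))" using iso_comp[OF hc u(1) i iu] .
      moreover have "Comp C u (Comp C k (ms b)) = ms b"
        using comp_assoc[OF hmb k u(1)] u(2) comp_id_l[OF hmb] by simp
      ultimately show False using mb(4) by simp
    qed
    have "\<forall>i < a. adm_monic C E (ms' i) \<and> Dom C (ms' i) = Xs' i \<and> Cod C (ms' i) = Xs' (Suc i) \<and> \<not> is_iso C (ms' i)"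
    proof (intro allI impI)
      fix i assume i: "i < a"
      show "adm_monic C E (ms' i) \<and> Dom C (ms' i) = Xs' i \<and> Cod C (ms' i) = Xs' (Suc i) \<and> \<not> is_iso C (ms' i)"
      proof (cases "i = b")
        case True
        then show ?thesis using am' ni hc unfolding Xs'_def ms'_def hom_def by simp
      next
        case False
        then have "i < b" using i Suc by simp
        then show ?thesis using c(3) Suc unfolding Xs'_def ms'_def by simp
      qed
    qed
    moreover have "zero_obj C (Xs' 0)" "Xs' a = Y" using c(1) Suc unfolding Xs'_def by auto
    ultimately show ?thesis unfolding E_chain_def by blast
  qed
qed

lemma chain_concat:
  assumes ch: "E_chain C E Y' a" and w0: "Ws 0 = Y'" and wb: "Ws b = Y"
    and ns: "\<forall>i<b. adm_monic C E (ns i) \<and> Dom C (ns i) = Ws i \<and> Cod C (ns i) = Ws (Suc i) \<and> \<not> is_iso C (ns i)"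
  shows "E_chain C E Y (a + b)"
proof -
  obtain Xs ms where c: "zero_obj C (Xs 0)" "Xs a = Y'"
    "\<forall>k < a. adm_monic C E (ms k) \<and> Dom C (ms k) = Xs k \<and> Cod C (ms k) = Xs (Suc k) \<and> \<not> is_iso C (ms k)"
    using ch unfolding E_chain_def by blast
  define Xs' where "Xs' = (\<lambda>i. if i \<le> a then Xs i else Ws (i - a))"
  define ms' where "ms' = (\<lambda>i. if i < a then ms i else ns (i - a))"
  have "\<forall>k < a + b. adm_monic C E (ms' k) \<and> Dom C (ms' k) = Xs' k \<and> Cod C (ms' k) = Xs' (Suc k) \<and> \<not> is_iso C (ms' k)"
  proof (intro allI impI)
    fix k assume k: "k < a + b"
    show "adm_monic C E (ms' k) \<and> Dom C (ms' k) = Xs' k \<and> Cod C (ms' k) = Xs' (Suc k) \<and> \<not> is_iso C (ms' k)"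
    proof (cases "k < a")
      case True
      then show ?thesis using c(3) unfolding Xs'_def ms'_def by simp
    next
      case False
      then have kb: "k - a < b" using k by simp
      have s: "Suc k - a = Suc (k - a)" using False by simp
      have "Xs' k = Ws (k - a)" using False c(2) w0 unfolding Xs'_def by (cases "k = a") auto
      then show ?thesis using ns kb False s unfolding Xs'_def ms'_def by simp
    qed
  qed
  moreover have "zero_obj C (Xs' 0)" using c(1) unfolding Xs'_def by simp
  moreover have "Xs' (a + b) = Y" using c(2) w0 wb unfolding Xs'_def by (cases "b = 0") auto
  ultimately show ?thesis unfolding E_chain_def by blast
qed

lemma chain_exists: assumes oX: "X \<in> Obj C" shows "\<exists>a. E_chain C E X a"
proof -
  obtain i where iE: "(i, Id C X) \<in> E" using ec_E0op[OF oX] unfolding adm_epic_def by blast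
  have ki: "is_kernel C i (Id C X)" using ec_ker[OF iE] .
  have hid: "Id C X \<in> hom C X X" using id_hom[OF oX] .
  have ddx: "Dom C (Id C X) = X" "Cod C (Id C X) = X" using hid unfolding hom_def by auto
  define K where "K = Dom C i"
  have hi: "i \<in> hom C K X" using ker_homs[OF ki] ddx unfolding K_def by simp
  have oK: "K \<in> Obj C" using hom_obj[OF hi] by simp
  have i0: "i = Zm C K X" using ker_zero[OF ki] comp_id_l[OF hi] ddx K_def by simp
  have zK: "zero_obj C K"
    unfolding zero_obj_def
  proof (intro conjI ballI)
    show "K \<in> Obj C" by (rule oK)
    fix t assume t: "t \<in> Obj C"
    have idK: "Id C K = Zm C K K"
    proof -
      have "Comp C i (Id C K) = Comp C i (Zm C K K)"
        using comp_id_r[OF hi] comp_zero_r[OF hi oK] i0 by simp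
      then show ?thesis using ker_mono[OF ki, of "Id C K" K "Zm C K K"] id_hom[OF oK] zm_hom[OF oK oK] K_def by simp
    qed
    show "\<exists>!f. f \<in> hom C K t"
    proof (rule ex1I)
      show "Zm C K t \<in> hom C K t" using zm_hom[OF oK t] .
      fix f assume f: "f \<in> hom C K t"
      show "f = Zm C K t" using comp_id_r[OF f] idK comp_zero_r[OF f oK] by simp
    qed
    show "\<exists>!f. f \<in> hom C t K"
    proof (rule ex1I)
      show "Zm C t K \<in> hom C t K" using zm_hom[OF t oK] .
      fix f assume f: "f \<in> hom C t K"
      have "Comp C i f = Comp C i (Zm C t K)"
        using i0 comp_zero_l[OF f oX] comp_zero_l[OF zm_hom[OF t oK] oX] by simp
      then show "f = Zm C t K" using ker_mono[OF ki, of f t "Zm C t K"] f zm_hom[OF t oK] K_def by simp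
    qed
  qed
  show ?thesis
  proof (cases "zero_obj C X")
    case True
    then have "E_chain C E X 0" unfolding E_chain_def
      by (rule_tac x="\<lambda>_. X" in exI) simp
    then show ?thesis by blast
  next
    case False
    have ni: "\<not> is_iso C i"
    proof
      assume "is_iso C i"
      then obtain g where g: "g \<in> hom C X K" "Comp C g i = Id C K" "Comp C i g = Id C X"
        using iso_inv[OF _ hi] by blast
      have "zero_obj C X" using zero_iso[OF zK hi g(1) g(2) g(3)] .
      then show False using False by simp
    qed
    have ai: "adm_monic C E i" using iE unfolding adm_monic_def by blast
    have "E_chain C E X 1" unfolding E_chain_def
      apply (rule_tac x="\<lambda>n. if n = 0 then K else X" in exI)
      apply (rule_tac x="\<lambda>_. i" in exI)
      using zK ai ni hi unfolding hom_def by simp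
    then show ?thesis by blast
  qed
qed

lemma length_attained:
  assumes f: "E_finite C E X" and oX: "X \<in> Obj C"
  shows "\<exists>a. E_chain C E X a \<and> E_length C E X = enat a"
proof -
  have ne: "{n. E_chain C E X n} \<noteq> {}" using chain_exists[OF oX] by blast
  have "(SUP n\<in>{n. E_chain C E X n}. enat n) < \<infinity>" using f unfolding E_finite_def E_length_def .
  from enat_sup_attained[OF ne this] show ?thesis unfolding E_length_def by blast
qed

end

theorem theorem6p4:
  fixes C :: "('o, 'm) addcat" and E :: "('m \<times> 'm) set"
    and X Y Z :: 'o and f g :: 'm
  assumes "exact_category C E"
    and "(f, g) \<in> E"
    and "f \<in> hom C X Y" and "g \<in> hom C Y Z"
    and "E_finite C E X" and "E_finite C E Y" and "E_finite C E Z"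
  shows "E_length C E Y \<ge> E_length C E X + E_length C E Z"
proof -
  interpret ecat C E by (rule ecat.intro) (rule assms(1))
  have oX: "X \<in> Obj C" and oY: "Y \<in> Obj C" and oZ: "Z \<in> Obj C"
    using hom_obj[OF assms(3)] hom_obj[OF assms(4)] by auto
  obtain a where a: "E_chain C E X a" "E_length C E X = enat a"
    using length_attained[OF assms(5) oX] by blast
  obtain b where b: "E_chain C E Z b" "E_length C E Z = enat b"
    using length_attained[OF assms(7) oZ] by blast
  obtain Zs ms where c: "zero_obj C (Zs 0)" "Zs b = Z"
    "\<forall>k < b. adm_monic C E (ms k) \<and> Dom C (ms k) = Zs k \<and> Cod C (ms k) = Zs (Suc k) \<and> \<not> is_iso C (ms k)"
    using b(1) unfolding E_chain_def by blast
  have ch: "\<forall>i<b. adm_monic C E (ms i) \<and> ms i \<in> hom C (Zs i) (Zs (Suc i)) \<and> \<not> is_iso C (ms i)"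
    using c(3) adm_monic_mor unfolding hom_def by blast
  obtain Y' k' e' Ws ns where d: "(k',e') \<in> E" "k' \<in> hom C X Y'" "e' \<in> hom C Y' (Zs 0)" "Ws 0 = Y'" "Ws b = Y"
      "\<forall>i<b. adm_monic C E (ns i) \<and> Dom C (ns i) = Ws i \<and> Cod C (ns i) = Ws (Suc i) \<and> \<not> is_iso C (ns i)"
    using descend[OF ch assms(2) assms(3)] assms(4) c(2) by metis
  obtain u where u: "u \<in> hom C Y' X" "Comp C u k' = Id C X" "Comp C k' u = Id C Y'"
    using ker_to_zero_iso[OF d(1) d(2) d(3) c(1)] by blast
  have ak: "adm_monic C E k'" using d(1) unfolding adm_monic_def by blast
  have "E_chain C E Y' a" using chain_transport[OF a(1) d(2) ak u] .
  then have "E_chain C E Y (a + b)" using chain_concat d(4) d(5) d(6) by blast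
  then have "enat (a + b) \<le> E_length C E Y" unfolding E_length_def by (rule SUP_upper[OF CollectI])
  then show ?thesis using a(2) b(2) by simp
qed

end
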